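(* Let $T$ be a regular, $T_{\mathrm{bin}}$-free binary tree. Then there exists a constant $C\in\mathbb N$ such that every anti-chain $A\subseteq T$ (with respect to the prefix order) contains at most $C$ elements $u$ with $\mathrm{CB}_*(T\restriction u)=\mathrm{CB}_*(T)$.
   Context: A binary tree is a prefix-closed subset $T\subseteq\{0,1\}^*$; it is regular if it is a regular language over $\{0,1\}$. For $u\in T$, $T\restriction u=\{v\in\{0,1\}^*:uv\in T\}$. $T_{\mathrm{bin}}=\{0,1\}^*$ ordered by the prefix relation $\preceq$; $T$ is $T_{\mathrm{bin}}$-free if there is no injection $f:\{0,1\}^*\to T$ with $u\preceq v\iff f(u)\preceq f(v)$. An infinite branch of $T$ is an infinite prefix-closed subset of $T$ linearly ordered by $\preceq$. The derivative $d(T)$ is the set of $u\in T$ contained in at least two distinct infinite branches of $T$; $d^{(0)}(T)=T$, $d^{(n)}(T)=d(d^{(n-1)}(T))$. For regular $T_{\mathrm{bin}}$-free $T$ some $d^{(n)}(T)$ is finite, and $\mathrm{CB}_*(T)$ is the least $n\in\mathbb N$ such that $d^{(n)}(T)$ is finite. An anti-chain is a set of pairwise $\preceq$-incomparable elements. *)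

theory Defs
  imports Main "HOL-Library.Sublist"
begin

text \<open>Binary words: lists over bool (False = 0, True = 1); prefix order is Sublist.prefix.\<close>

definition binary_tree :: "bool list set \<Rightarrow> bool" where
  "binary_tree T \<longleftrightarrow> (\<forall>u v. u @ v \<in> T \<longrightarrow> u \<in> T)"

definition regular_lang :: "bool list set \<Rightarrow> bool" where
  "regular_lang L \<longleftrightarrow> (\<exists>(Q::nat set) (\<delta>::nat \<Rightarrow> bool \<Rightarrow> nat) q0 F.
      finite Q \<and> q0 \<in> Q \<and> (\<forall>q\<in>Q. \<forall>a. \<delta> q a \<in> Q) \<and> F \<subseteq> Q \<and>
      L = {w. foldl \<delta> q0 w \<in> F})"

definition restrict_tree :: "bool list set \<Rightarrow> bool list \<Rightarrow> bool list set" where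
  "restrict_tree T u = {v. u @ v \<in> T}"

definition Tbin_free :: "bool list set \<Rightarrow> bool" where
  "Tbin_free T \<longleftrightarrow> \<not> (\<exists>f :: bool list \<Rightarrow> bool list. inj f \<and> range f \<subseteq> T \<and>
      (\<forall>u v. prefix u v \<longleftrightarrow> prefix (f u) (f v)))"

definition infinite_branch :: "bool list set \<Rightarrow> bool list set \<Rightarrow> bool" where
  "infinite_branch T B \<longleftrightarrow> B \<subseteq> T \<and> infinite B \<and> (\<forall>u v. u @ v \<in> B \<longrightarrow> u \<in> B) \<and>
      (\<forall>u\<in>B. \<forall>v\<in>B. prefix u v \<or> prefix v u)"

definition derivative :: "bool list set \<Rightarrow> bool list set" where
  "derivative T = {u \<in> T. \<exists>B1 B2. infinite_branch T B1 \<and> infinite_branch T B2 \<and>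
      B1 \<noteq> B2 \<and> u \<in> B1 \<and> u \<in> B2}"

definition CB_star :: "bool list set \<Rightarrow> nat" where
  "CB_star T = (LEAST n. finite ((derivative ^^ n) T))"

definition antichain :: "bool list set \<Rightarrow> bool" where
  "antichain A \<longleftrightarrow> (\<forall>u\<in>A. \<forall>v\<in>A. u \<noteq> v \<longrightarrow> \<not> prefix u v \<and> \<not> prefix v u)"

end

theory Submission
  imports Defs
begin

lemma bt_prefix: "binary_tree S \<Longrightarrow> w \<in> S \<Longrightarrow> prefix p w \<Longrightarrow> p \<in> S"
  by (auto simp: binary_tree_def prefix_def)

lemma derivative_sub: "derivative S \<subseteq> S"
  by (auto simp: derivative_def)

lemma branch_prefix: "infinite_branch S B \<Longrightarrow> w \<in> B \<Longrightarrow> prefix p w \<Longrightarrow> p \<in> B"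
  by (auto simp: infinite_branch_def prefix_def)

lemma branch_chain: "infinite_branch S B \<Longrightarrow> x \<in> B \<Longrightarrow> y \<in> B \<Longrightarrow> prefix x y \<or> prefix y x"
  by (auto simp: infinite_branch_def)

lemma bt_derivative: "binary_tree S \<Longrightarrow> binary_tree (derivative S)"
proof -
  assume bt: "binary_tree S"
  show ?thesis unfolding binary_tree_def
  proof (intro allI impI)
    fix u v assume "u @ v \<in> derivative S"
    then obtain B1 B2 where b: "infinite_branch S B1" "infinite_branch S B2" "B1 \<noteq> B2"
      "u @ v \<in> B1" "u @ v \<in> B2" "u @ v \<in> S" by (auto simp: derivative_def)
    have "u \<in> B1" "u \<in> B2" "u \<in> S" using branch_prefix[OF b(1) b(4)] branch_prefix[OF b(2) b(5)]
        bt_prefix[OF bt b(6)] by auto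
    then show "u \<in> derivative S" using b unfolding derivative_def by blast
  qed
qed

lemma lift_branch:
  assumes bt: "binary_tree S" and B: "infinite_branch (restrict_tree S u) B"
  shows "infinite_branch S ({w. prefix w u} \<union> (\<lambda>v. u@v) ` B)"
    and "[] \<in> B"
proof -
  from B have inf: "infinite B" by (simp add: infinite_branch_def)
  then obtain b where "b \<in> B" using infinite_imp_nonempty by blast
  then show e: "[] \<in> B" using branch_prefix[OF B] by auto
  have "u \<in> S" using B e by (auto simp: infinite_branch_def restrict_tree_def)
  show "infinite_branch S ({w. prefix w u} \<union> (\<lambda>v. u@v) ` B)"
    unfolding infinite_branch_def
  proof (intro conjI allI impI ballI)
    show "{w. prefix w u} \<union> (@) u ` B \<subseteq> S"
      using B \<open>u \<in> S\<close> bt_prefix[OF bt] by (auto simp: infinite_branch_def restrict_tree_def)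
    show "infinite ({w. prefix w u} \<union> (@) u ` B)"
      using inf finite_imageD[of "(@) u" B] by (auto simp: inj_on_def dest: finite_subset[rotated])
  next
    fix x y assume "x @ y \<in> {w. prefix w u} \<union> (@) u ` B"
    then show "x \<in> {w. prefix w u} \<union> (@) u ` B"
    proof
      assume "x @ y \<in> {w. prefix w u}" then show ?thesis by (auto simp: prefix_def)
    next
      assume "x @ y \<in> (@) u ` B"
      then obtain v where v: "v \<in> B" "x @ y = u @ v" by auto
      then obtain us where "x = u @ us \<and> us @ y = v \<or> x @ us = u \<and> y = us @ v"
        by (auto simp: append_eq_append_conv2)
      then show ?thesis
      proof
        assume h: "x = u @ us \<and> us @ y = v"
        then have "us \<in> B" using branch_prefix[OF B v(1)] by auto
        then show ?thesis using h by auto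
      next
        assume "x @ us = u \<and> y = us @ v" then show ?thesis by (auto simp: prefix_def)
      qed
    qed
  next
    fix x y assume x: "x \<in> {w. prefix w u} \<union> (@) u ` B" and y: "y \<in> {w. prefix w u} \<union> (@) u ` B"
    show "prefix x y \<or> prefix y x"
    proof -
      { assume "prefix x u" "prefix y u" then have ?thesis by (rule prefix_same_cases) }
      moreover
      { fix v assume "prefix x u" "v \<in> B" "y = u @ v" then have "prefix x y"
          by (metis prefix_append) }
      moreover
      { fix v assume "prefix y u" "v \<in> B" "x = u @ v" then have "prefix y x"
          by (metis prefix_append) }
      moreover
      { fix v w assume "v \<in> B" "w \<in> B" "x = u @ v" "y = u @ w" then have ?thesis
          using branch_chain[OF B, of v w] by auto }
      ultimately show ?thesis using x y by blast
    qed
  qed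
qed

lemma lift_recover:
  assumes "[] \<in> B"
  shows "{v. u @ v \<in> {w. prefix w u} \<union> (\<lambda>v. u@v) ` B} = B"
  using assms by (auto simp: prefix_def)

lemma lower_branch:
  assumes B: "infinite_branch S B" and u: "u \<in> B"
  shows "B = {w. prefix w u} \<union> (\<lambda>v. u@v) ` {v. u@v \<in> B}"
    and "infinite_branch (restrict_tree S u) {v. u@v \<in> B}"
proof -
  show eq: "B = {w. prefix w u} \<union> (\<lambda>v. u@v) ` {v. u@v \<in> B}"
  proof
    show "B \<subseteq> {w. prefix w u} \<union> (\<lambda>v. u@v) ` {v. u@v \<in> B}"
    proof
      fix w assume "w \<in> B"
      then have "prefix w u \<or> prefix u w" using branch_chain[OF B _ u] by blast
      then show "w \<in> {w. prefix w u} \<union> (\<lambda>v. u@v) ` {v. u@v \<in> B}"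
        using \<open>w \<in> B\<close> by (auto simp: prefix_def)
    qed
    show "{w. prefix w u} \<union> (\<lambda>v. u@v) ` {v. u@v \<in> B} \<subseteq> B"
      using branch_prefix[OF B u] by auto
  qed
  have fin: "finite {w. prefix w u}"
  proof -
    have "{w. prefix w u} = set (prefixes u)" by auto
    then show ?thesis by simp
  qed
  have "infinite B" using B by (simp add: infinite_branch_def)
  then have inf: "infinite {v. u@v \<in> B}"
    using fin eq by (metis finite_UnI finite_imageI)
  show "infinite_branch (restrict_tree S u) {v. u@v \<in> B}"
    unfolding infinite_branch_def
  proof (intro conjI allI impI ballI)
    show "{v. u @ v \<in> B} \<subseteq> restrict_tree S u"
      using B by (auto simp: infinite_branch_def restrict_tree_def)
    show "infinite {v. u @ v \<in> B}" by (rule inf)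
  next
    fix x y assume "x @ y \<in> {v. u @ v \<in> B}"
    then show "x \<in> {v. u @ v \<in> B}"
      using branch_prefix[OF B, of "u @ x @ y" "u @ x"] by auto
  next
    fix x y assume "x \<in> {v. u @ v \<in> B}" "y \<in> {v. u @ v \<in> B}"
    then show "prefix x y \<or> prefix y x"
      using branch_chain[OF B, of "u@x" "u@y"] by auto
  qed
qed

lemma derivative_restrict:
  assumes bt: "binary_tree S"
  shows "derivative (restrict_tree S u) = restrict_tree (derivative S) u"
proof
  show "derivative (restrict_tree S u) \<subseteq> restrict_tree (derivative S) u"
  proof
    fix v assume "v \<in> derivative (restrict_tree S u)"
    then obtain B1 B2 where b: "infinite_branch (restrict_tree S u) B1"
      "infinite_branch (restrict_tree S u) B2" "B1 \<noteq> B2" "v \<in> B1" "v \<in> B2"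
      "v \<in> restrict_tree S u"
      by (auto simp: derivative_def)
    let ?L1 = "{w. prefix w u} \<union> (\<lambda>v. u@v) ` B1"
    let ?L2 = "{w. prefix w u} \<union> (\<lambda>v. u@v) ` B2"
    have "?L1 \<noteq> ?L2"
      using lift_recover[OF lift_branch(2)[OF bt b(1)], of u]
        lift_recover[OF lift_branch(2)[OF bt b(2)], of u] b(3) by metis
    then have "u @ v \<in> derivative S"
      using lift_branch(1)[OF bt b(1)] lift_branch(1)[OF bt b(2)] b(4,5,6)
      unfolding derivative_def restrict_tree_def by blast
    then show "v \<in> restrict_tree (derivative S) u" by (simp add: restrict_tree_def)
  qed
next
  show "restrict_tree (derivative S) u \<subseteq> derivative (restrict_tree S u)"
  proof
    fix v assume "v \<in> restrict_tree (derivative S) u"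
    then obtain B1 B2 where b: "infinite_branch S B1" "infinite_branch S B2" "B1 \<noteq> B2"
      "u @ v \<in> B1" "u @ v \<in> B2" "u @ v \<in> S"
      by (auto simp: derivative_def restrict_tree_def)
    have u1: "u \<in> B1" "u \<in> B2" using branch_prefix b by auto
    have "{v. u@v \<in> B1} \<noteq> {v. u@v \<in> B2}"
      using lower_branch(1)[OF b(1) u1(1)] lower_branch(1)[OF b(2) u1(2)] b(3) by metis
    then show "v \<in> derivative (restrict_tree S u)"
      using lower_branch(2)[OF b(1) u1(1)] lower_branch(2)[OF b(2) u1(2)] b(4,5,6)
      unfolding derivative_def restrict_tree_def by blast
  qed
qed

lemma bt_iter: "binary_tree S \<Longrightarrow> binary_tree ((derivative^^k) S)"
  by (induction k) (auto intro: bt_derivative)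

lemma iter_restrict:
  "binary_tree S \<Longrightarrow> (derivative^^k) (restrict_tree S u) = restrict_tree ((derivative^^k) S) u"
  by (induction k) (auto simp: derivative_restrict bt_iter)

lemma iter_mono: "(derivative^^(Suc k)) S \<subseteq> (derivative^^k) S"
  using derivative_sub by simp


definition ext :: "bool list set \<Rightarrow> bool list \<Rightarrow> bool list set" where
  "ext D w = {z \<in> D. prefix w z}"

fun kseq :: "bool list set \<Rightarrow> bool list \<Rightarrow> nat \<Rightarrow> bool list" where
  "kseq D u 0 = u"
| "kseq D u (Suc k) = (if infinite (ext D (kseq D u k @ [True])) then kseq D u k @ [True]
      else kseq D u k @ [False])"

lemma ext_split: "ext D w \<subseteq> {w} \<union> ext D (w @ [True]) \<union> ext D (w @ [False])"
proof
  fix z assume "z \<in> ext D w"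
  then obtain r where r: "z = w @ r" "z \<in> D" by (auto simp: ext_def prefix_def)
  show "z \<in> {w} \<union> ext D (w @ [True]) \<union> ext D (w @ [False])"
  proof (cases r)
    case Nil then show ?thesis using r by auto
  next
    case (Cons b r') then show ?thesis using r by (cases b) (auto simp: ext_def prefix_def)
  qed
qed

lemma kseq_inf: "infinite (ext D u) \<Longrightarrow> infinite (ext D (kseq D u k))"
proof (induction k)
  case 0 then show ?case by simp
next
  case (Suc k)
  let ?w = "kseq D u k"
  have "infinite (ext D (?w @ [True])) \<or> infinite (ext D (?w @ [False]))"
  proof (rule ccontr)
    assume "\<not> ?thesis"
    then have "finite ({?w} \<union> ext D (?w @ [True]) \<union> ext D (?w @ [False]))" by simp
    then show False using Suc ext_split[of D ?w] finite_subset by blast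
  qed
  then show ?case by auto
qed

lemma kseq_len: "length (kseq D u k) = length u + k"
  by (induction k) auto

lemma kseq_prefix: "i \<le> j \<Longrightarrow> prefix (kseq D u i) (kseq D u j)"
proof (induction j)
  case 0 then show ?case by simp
next
  case (Suc j)
  show ?case
  proof (cases "i = Suc j")
    case False
    then have "prefix (kseq D u i) (kseq D u j)" using Suc by simp
    then show ?thesis by (auto simp: prefix_def)
  qed simp
qed

lemma koenig:
  assumes bt: "binary_tree D" and inf: "infinite (restrict_tree D u)"
  shows "\<exists>B. infinite_branch D B \<and> u \<in> B"
proof -
  have "ext D u = (\<lambda>v. u @ v) ` restrict_tree D u"
    by (auto simp: ext_def restrict_tree_def prefix_def)
  moreover have "inj ((@) u)" by (rule injI) simp
  ultimately have infe: "infinite (ext D u)" using inf finite_imageD inj_on_subset by (metis subset_UNIV)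
  let ?f = "kseq D u"
  define B where "B = {w. \<exists>k. prefix w (?f k)}"
  have fD: "?f k \<in> D" for k
  proof -
    from kseq_inf[OF infe, of k] obtain z where "z \<in> ext D (?f k)"
      using infinite_imp_nonempty by blast
    then show ?thesis using bt_prefix[OF bt, of z] unfolding ext_def by blast
  qed
  have "infinite_branch D B" unfolding infinite_branch_def
  proof (intro conjI allI impI ballI)
    show "B \<subseteq> D" using fD bt_prefix[OF bt] unfolding B_def by blast
    have "range ?f \<subseteq> B" by (auto simp: B_def)
    moreover have "inj ?f" by (rule injI) (metis kseq_len add_left_imp_eq)
    ultimately show "infinite B" using finite_imageD finite_subset infinite_UNIV_nat by metis
  next
    fix x y assume "x @ y \<in> B" then show "x \<in> B"
      by (auto simp: B_def prefix_def)
  next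
    fix x y assume "x \<in> B" "y \<in> B"
    then obtain i j where ij: "prefix x (?f i)" "prefix y (?f j)" unfolding B_def by blast
    show "prefix x y \<or> prefix y x"
    proof (cases "i \<le> j")
      case True
      then have "prefix x (?f j)" using ij(1) kseq_prefix[of i j D u] prefix_order.trans by blast
      then show ?thesis using ij(2) prefix_same_cases by blast
    next
      case False
      then have "prefix y (?f i)" using ij(2) kseq_prefix[of j i D u] prefix_order.trans by simp
      then show ?thesis using ij(1) prefix_same_cases by blast
    qed
  qed
  moreover have "prefix u (kseq D u 0)" by simp
  then have "u \<in> B" unfolding B_def by blast
  ultimately show ?thesis by blast
qed

lemma finite_len_le: "finite {y :: bool list. length y \<le> n}"
  using finite_lists_length_le[of "UNIV :: bool set" n] by simp

lemma split_aux:
  assumes B1: "infinite_branch D B1" and B2: "infinite_branch D B2"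
    and w: "w \<in> B1" "w \<in> B2" and x: "x \<in> B1" "x \<notin> B2"
  shows "\<exists>x y. x \<in> D \<and> y \<in> D \<and> prefix w x \<and> prefix w y \<and> \<not> prefix x y \<and> \<not> prefix y x"
proof -
  have "infinite B2" using B2 by (simp add: infinite_branch_def)
  then obtain y where y: "y \<in> B2" "length y > length x"
  proof -
    have "\<not> B2 \<subseteq> {y. length y \<le> length x}"
      using \<open>infinite B2\<close> finite_len_le[of "length x"] finite_subset by blast
    then obtain y where "y \<in> B2" "\<not> length y \<le> length x" by blast
    then show ?thesis using that[of y] by simp
  qed
  have "\<not> prefix x w" using branch_prefix[OF B2 w(2)] x by blast
  then have wx: "prefix w x" using branch_chain[OF B1 w(1) x(1)] by blast
  have xy1: "\<not> prefix x y" using branch_prefix[OF B2 y(1)] x by blast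
  have xy2: "\<not> prefix y x" using y(2) prefix_length_le by fastforce
  have "\<not> prefix y w" using y(2) prefix_length_le[OF wx] prefix_length_le by fastforce
  then have wy: "prefix w y" using branch_chain[OF B2 w(2) y(1)] by blast
  have "x \<in> D" "y \<in> D" using x y B1 B2 by (auto simp: infinite_branch_def)
  then show ?thesis using wx wy xy1 xy2 by blast
qed

lemma split_node:
  assumes "w \<in> derivative D"
  shows "\<exists>x y. x \<in> D \<and> y \<in> D \<and> prefix w x \<and> prefix w y \<and> \<not> prefix x y \<and> \<not> prefix y x"
proof -
  obtain B1 B2 where b: "infinite_branch D B1" "infinite_branch D B2" "B1 \<noteq> B2" "w \<in> B1" "w \<in> B2"
    using assms by (auto simp: derivative_def)
  then obtain x where "x \<in> B1 \<and> x \<notin> B2 \<or> x \<in> B2 \<and> x \<notin> B1" by blast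
  then show ?thesis
  proof
    assume "x \<in> B1 \<and> x \<notin> B2" then show ?thesis using split_aux[OF b(1,2,4,5)] by blast
  next
    assume "x \<in> B2 \<and> x \<notin> B1" then show ?thesis using split_aux[OF b(2,1,5,4)] by blast
  qed
qed

lemma perfect_embed:
  assumes dD: "derivative D = D" and w0: "w0 \<in> D" and DT: "D \<subseteq> T"
  shows "\<not> Tbin_free T"
proof -
  have "\<forall>w\<in>D. \<exists>p. fst p \<in> D \<and> snd p \<in> D \<and> prefix w (fst p) \<and> prefix w (snd p) \<and>
      \<not> prefix (fst p) (snd p) \<and> \<not> prefix (snd p) (fst p)"
    using split_node dD by fastforce
  then obtain g where g: "\<forall>w\<in>D. fst (g w) \<in> D \<and> snd (g w) \<in> D \<and> prefix w (fst (g w)) \<and>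
      prefix w (snd (g w)) \<and> \<not> prefix (fst (g w)) (snd (g w)) \<and> \<not> prefix (snd (g w)) (fst (g w))"
    by metis
  define c where "c = (\<lambda>w (b::bool). if b then fst (g w) else snd (g w))"
  have cD: "w \<in> D \<Longrightarrow> c w b \<in> D" for w b using g by (auto simp: c_def)
  have cp: "w \<in> D \<Longrightarrow> prefix w (c w b)" for w b using g by (auto simp: c_def)
  have cinc: "w \<in> D \<Longrightarrow> b \<noteq> b' \<Longrightarrow> \<not> prefix (c w b) (c w b')" for w b b'
    using g by (cases b; cases b') (auto simp: c_def)
  have clen: "w \<in> D \<Longrightarrow> length (c w b) > length w" for w b
  proof -
    assume w: "w \<in> D"
    have "c w b \<noteq> w"
    proof
      assume "c w b = w"
      then have "prefix (c w b) (c w (\<not> b))" using cp[OF w] by simp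
      then show False using cinc[OF w] by simp
    qed
    then show ?thesis using cp[OF w, of b] prefix_length_le
      by (simp add: prefix_length_less strict_prefix_def)
  qed
  define f where "f = foldl c w0"
  have fD: "w \<in> D \<Longrightarrow> foldl c w v \<in> D" for w v
    by (induction v arbitrary: w) (auto simp: cD)
  have fp: "w \<in> D \<Longrightarrow> prefix w (foldl c w v)" for w v
    by (induction v arbitrary: w) (auto intro: prefix_order.trans cp cD)
  have fl: "w \<in> D \<Longrightarrow> v \<noteq> [] \<Longrightarrow> length (foldl c w v) > length w" for w v
  proof (induction v arbitrary: w)
    case (Cons b v)
    have "length (foldl c (c w b) v) \<ge> length (c w b)"
      using fp[OF cD[OF Cons.prems(1)], of b v] prefix_length_le by blast
    then show ?case using clen[OF Cons.prems(1), of b] by simp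
  qed simp
  have f0: "f u \<in> D" for u using fD w0 by (simp add: f_def)
  have iff: "prefix u v \<longleftrightarrow> prefix (f u) (f v)" for u v
  proof
    assume "prefix u v" then obtain z where "v = u @ z" by (auto simp: prefix_def)
    then show "prefix (f u) (f v)" using fp[OF f0[of u], of z] by (simp add: f_def)
  next
    assume h: "prefix (f u) (f v)"
    show "prefix u v"
    proof (rule ccontr)
      assume nuv: "\<not> prefix u v"
      show False
      proof (cases "prefix v u")
        case True
        then obtain z where z: "u = v @ z" "z \<noteq> []" using nuv by (auto simp: prefix_def)
        then have "length (f u) > length (f v)" using fl[OF f0[of v] z(2)] by (simp add: f_def)
        then show False using h prefix_length_le by fastforce
      next
        case False
        then have "parallel u v" using nuv by (simp add: parallel_def)
        then obtain as b bs b' cs where d: "b \<noteq> b'" "u = as @ b # bs" "v = as @ b' # cs"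
          using parallel_decomp[OF \<open>parallel u v\<close>] by blast
        have p1: "prefix (c (f as) b) (f u)"
          using fp[OF cD[OF f0[of as]], of b bs] d(2) by (simp add: f_def)
        have p2: "prefix (c (f as) b') (f v)"
          using fp[OF cD[OF f0[of as]], of b' cs] d(3) by (simp add: f_def)
        have "prefix (c (f as) b) (f v)" using p1 h by (rule prefix_order.trans)
        then have "prefix (c (f as) b) (c (f as) b') \<or> prefix (c (f as) b') (c (f as) b)"
          using p2 prefix_same_cases by blast
        then show False using cinc[OF f0[of as]] d(1) by metis
      qed
    qed
  qed
  have "inj f" by (rule injI) (metis iff prefix_order.antisym prefix_order.refl)
  moreover have "range f \<subseteq> T" using f0 DT by auto
  ultimately show ?thesis unfolding Tbin_free_def using iff by blast
qed

lemma foldl_closed: "q \<in> Q \<Longrightarrow> \<forall>q\<in>Q. \<forall>a. \<delta> q a \<in> Q \<Longrightarrow> foldl \<delta> q w \<in> Q"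
  by (induction w arbitrary: q) auto

lemma exists_finite:
  assumes bt: "binary_tree T" and reg: "regular_lang T" and free: "Tbin_free T"
  shows "\<exists>n. finite ((derivative^^n) T)"
proof -
  obtain Q :: "nat set" and \<delta> q0 F where A: "finite Q" "q0 \<in> Q" "\<forall>q\<in>Q. \<forall>a. \<delta> q a \<in> Q" "F \<subseteq> Q"
    "T = {w. foldl \<delta> q0 w \<in> F}"
    using reg unfolding regular_lang_def by blast
  define R where "R = (\<lambda>q. {v. foldl \<delta> q v \<in> F})"
  define st where "st = foldl \<delta> q0"
  have rest: "restrict_tree T u = R (st u)" for u
    by (simp add: restrict_tree_def R_def st_def A(5))
  have stQ: "st u \<in> Q" for u unfolding st_def by (rule foldl_closed[OF A(2) A(3)])
  define Qk where "Qk = (\<lambda>k. {q \<in> Q. [] \<in> (derivative^^k) (R q)})"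
  have mem: "u \<in> (derivative^^k) T \<longleftrightarrow> st u \<in> Qk k" for u k
  proof -
    have "u \<in> (derivative^^k) T \<longleftrightarrow> [] \<in> restrict_tree ((derivative^^k) T) u"
      by (simp add: restrict_tree_def)
    also have "\<dots> \<longleftrightarrow> [] \<in> (derivative^^k) (R (st u))"
      using iter_restrict[OF bt, of k u] rest by simp
    finally show ?thesis using stQ by (simp add: Qk_def)
  qed
  have anti: "Qk (Suc k) \<subseteq> Qk k" for k
    using iter_mono unfolding Qk_def by blast
  have "\<exists>K. Qk (Suc K) = Qk K"
  proof (rule ccontr)
    assume "\<not> ?thesis"
    then have ps: "Qk (Suc k) \<subset> Qk k" for k using anti by blast
    have fin: "finite (Qk k)" for k using A(1) by (simp add: Qk_def)
    have "card (Qk k) + k \<le> card Q" for k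
    proof (induction k)
      case 0 then show ?case using A(1) by (simp add: Qk_def card_mono)
    next
      case (Suc k) then show ?case using psubset_card_mono[OF fin ps[of k]] by simp
    qed
    then show False by (metis add_leD2 not_less_eq_eq)
  qed
  then obtain K where K: "Qk (Suc K) = Qk K" by blast
  have "derivative ((derivative^^K) T) = (derivative^^K) T"
  proof -
    have "(derivative^^(Suc K)) T = (derivative^^K) T"
      using mem K by blast
    then show ?thesis by simp
  qed
  moreover have "(derivative^^K) T \<subseteq> T"
    by (induction K) (auto dest: subsetD[OF derivative_sub])
  ultimately have "(derivative^^K) T = {}" using perfect_embed free by blast
  then show ?thesis by (metis finite.emptyI)
qed


theorem lemma5p6:
  fixes T :: "bool list set"
  assumes "binary_tree T" and "regular_lang T" and "Tbin_free T"
  shows "\<exists>C::nat. \<forall>A. A \<subseteq> T \<and> antichain A \<longrightarrow>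
           finite {u \<in> A. CB_star (restrict_tree T u) = CB_star T} \<and>
           card {u \<in> A. CB_star (restrict_tree T u) = CB_star T} \<le> C"
proof -
  note bt = assms(1)
  obtain n0 where "finite ((derivative^^n0) T)" using exists_finite[OF assms] by blast
  then have finn: "finite ((derivative^^(CB_star T)) T)"
    unfolding CB_star_def by (rule LeastI)
  show ?thesis
  proof (cases "CB_star T")
    case 0
    then have fT: "finite T" using finn by simp
    show ?thesis
    proof (intro exI allI impI)
      fix A assume A: "A \<subseteq> T \<and> antichain A"
      have sub: "{u \<in> A. CB_star (restrict_tree T u) = CB_star T} \<subseteq> T" using A by blast
      show "finite {u \<in> A. CB_star (restrict_tree T u) = CB_star T} \<and>
           card {u \<in> A. CB_star (restrict_tree T u) = CB_star T} \<le> card T"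
        using finite_subset[OF sub fT] card_mono[OF fT sub] by blast
    qed
  next
    case (Suc m)
    define D where "D = (derivative^^m) T"
    define E where "E = derivative D"
    have btD: "binary_tree D" unfolding D_def by (rule bt_iter[OF bt])
    have finE: "finite E" using finn Suc by (simp add: E_def D_def)
    define G where "G = insert [] (E \<union> (\<lambda>(p,b). p @ [b]) ` (E \<times> (UNIV :: bool set)))"
    have finG: "finite G" using finE by (simp add: G_def)
    show ?thesis
    proof (intro exI allI impI)
      fix A assume A: "A \<subseteq> T \<and> antichain A"
      define S where "S = {u \<in> A. CB_star (restrict_tree T u) = CB_star T}"
      have infS: "infinite (restrict_tree D u)" if "u \<in> S" for u
      proof
        assume fin: "finite (restrict_tree D u)"
        have "finite ((derivative^^m) (restrict_tree T u))"
          using fin iter_restrict[OF bt, of m u] by (simp add: D_def)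
        then have "CB_star (restrict_tree T u) \<le> m" unfolding CB_star_def by (rule Least_le)
        then show False using that Suc by (simp add: S_def)
      qed
      define \<phi> where "\<phi> = (\<lambda>u. if u \<in> E then u else take (LEAST i. take i u \<notin> E) u)"
      have least: "take (LEAST i. take i u \<notin> E) u \<notin> E \<and> (LEAST i. take i u \<notin> E) \<le> length u
          \<and> (\<forall>i < (LEAST i. take i u \<notin> E). take i u \<in> E)" if "u \<notin> E" for u
      proof -
        have ex: "take (length u) u \<notin> E" using that by simp
        show ?thesis using LeastI[of "\<lambda>i. take i u \<notin> E", OF ex] Least_le[of "\<lambda>i. take i u \<notin> E", OF ex]
          not_less_Least[of _ "\<lambda>i. take i u \<notin> E"] by blast
      qed
      have img: "\<phi> ` S \<subseteq> G"
      proof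
        fix x assume "x \<in> \<phi> ` S"
        then obtain u where u: "x = \<phi> u" by blast
        show "x \<in> G"
        proof (cases "u \<in> E")
          case True then show ?thesis using u by (simp add: \<phi>_def G_def)
        next
          case False
          define j where "j = (LEAST i. take i u \<notin> E)"
          have x: "x = take j u" using u False by (simp add: \<phi>_def j_def)
          have l: "j \<le> length u" "\<forall>i<j. take i u \<in> E" using least[OF False] by (auto simp: j_def)
          show ?thesis
          proof (cases j)
            case 0 then show ?thesis using x by (simp add: G_def)
          next
            case (Suc i)
            then have "take i u \<in> E" "i < length u" using l by auto
            moreover have "take j u = take i u @ [u ! i]"
              using Suc \<open>i < length u\<close> by (simp add: take_Suc_conv_app_nth)
            ultimately have "x = (\<lambda>(p,b). p @ [b]) (take i u, u ! i)" "(take i u, u ! i) \<in> E \<times> UNIV"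
              using x by auto
            then show ?thesis unfolding G_def by blast
          qed
        qed
      qed
      have tp: "prefix (take i u) u" for i :: nat and u :: "bool list" by (rule take_is_prefix)
      have inj: "inj_on \<phi> S"
      proof (rule inj_onI, rule ccontr)
        fix u v assume u: "u \<in> S" and v: "v \<in> S" and eq: "\<phi> u = \<phi> v" and ne: "u \<noteq> v"
        have inc: "\<not> prefix u v" "\<not> prefix v u" using A u v ne unfolding antichain_def S_def by blast+
        show False
        proof (cases "u \<in> E")
          case True
          show False
          proof (cases "v \<in> E")
            case True then show False using \<open>u \<in> E\<close> eq ne by (simp add: \<phi>_def)
          next
            case False
            then have "u = take (LEAST i. take i v \<notin> E) v" using eq \<open>u \<in> E\<close> by (simp add: \<phi>_def)
            then show False using inc tp by metis
          qed
        next
          case False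
          note uE = False
          show False
          proof (cases "v \<in> E")
            case True
            then have "v = take (LEAST i. take i u \<notin> E) u" using eq uE by (simp add: \<phi>_def)
            then show False using inc tp by metis
          next
            case False
            define p where "p = \<phi> u"
            have pu: "prefix p u" using uE tp by (simp add: p_def \<phi>_def)
            have pv: "prefix p v" using False tp eq by (simp add: p_def \<phi>_def)
            have pE: "p \<notin> E" using least[OF uE] uE by (simp add: p_def \<phi>_def)
            obtain Bu where Bu: "infinite_branch D Bu" "u \<in> Bu" using koenig[OF btD infS[OF u]] by blast
            obtain Bv where Bv: "infinite_branch D Bv" "v \<in> Bv" using koenig[OF btD infS[OF v]] by blast
            have "Bu \<noteq> Bv" using branch_chain[OF Bu(1) Bu(2)] Bv(2) inc by blast
            moreover have "p \<in> Bu" "p \<in> Bv" using branch_prefix Bu Bv pu pv by blast+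
            moreover have "p \<in> D" using Bu \<open>p \<in> Bu\<close> by (auto simp: infinite_branch_def)
            ultimately have "p \<in> E" unfolding E_def derivative_def using Bu(1) Bv(1) by blast
            then show False using pE by blast
          qed
        qed
      qed
      have "finite (\<phi> ` S)" using img finG finite_subset by blast
      then have fS: "finite S" using inj finite_imageD by blast
      have "card S = card (\<phi> ` S)" using inj card_image by metis
      also have "\<dots> \<le> card G" using img finG card_mono by blast
      finally show "finite {u \<in> A. CB_star (restrict_tree T u) = CB_star T} \<and>
           card {u \<in> A. CB_star (restrict_tree T u) = CB_star T} \<le> card G"
        using fS by (simp add: S_def)
    qed
  qed
qed

end
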